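(* Let $d\ge1$. Let $G$ be a $3$-connected ordered graph on $n$ vertices with $m$ edges, and let $H$ be an ordered graph with no isolated vertices and with $m$ edges. Suppose $M^{\mathbb E}_{d,G}=M^{\mathbb E}_{d,H}$. Then there is a bijection $\sigma$ from the vertex set of $G$ to the vertex set of $H$ such that for every $k$, if the $k$-th edge of $G$ is $\{i,j\}$ then the $k$-th edge of $H$ is $\{\sigma(i),\sigma(j)\}$.
   Context: An ordered graph is a finite vertex set together with an ordered sequence $(E_1,\dots,E_m)$ of distinct unordered pairs of distinct vertices. For a real configuration $\mathbf p$ (one point $\mathbf p_i\in\mathbb R^d$ per vertex), $m^{\mathbb E}_G(\mathbf p)\in\mathbb R^m$ has $k$-th coordinate $\|\mathbf p_i-\mathbf p_j\|^2$ where $E_k=\{i,j\}$. The Euclidean measurement set $M^{\mathbb E}_{d,G}\subseteq\mathbb R^m$ is the image of $m^{\mathbb E}_G$ over all real configurations in $\mathbb R^d$. *)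

theory Defs
  imports "HOL-Analysis.Analysis"
begin

text \<open>Each edge is stored
  as a pair (i,j) of distinct vertices representing the unordered pair {i,j};
  the unordered pairs are pairwise distinct.\<close>
definition ordered_graph :: "'a set \<Rightarrow> ('a \<times> 'a) list \<Rightarrow> bool" where
  "ordered_graph V E \<longleftrightarrow> finite V \<and>
     (\<forall>(i,j)\<in>set E. i \<in> V \<and> j \<in> V \<and> i \<noteq> j) \<and>
     distinct (map (\<lambda>(i,j). {i,j}) E)"

definition edge_set :: "('a \<times> 'a) list \<Rightarrow> 'a set list" where
  "edge_set E = map (\<lambda>(i,j). {i,j}) E"

definition adj_on :: "'a set \<Rightarrow> ('a \<times> 'a) list \<Rightarrow> ('a \<times> 'a) set" where
  "adj_on W E = {(u,v). u \<in> W \<and> v \<in> W \<and> ((u,v) \<in> set E \<or> (v,u) \<in> set E)}"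

definition connected_on :: "'a set \<Rightarrow> ('a \<times> 'a) list \<Rightarrow> bool" where
  "connected_on W E \<longleftrightarrow> (\<forall>u\<in>W. \<forall>v\<in>W. (u,v) \<in> (adj_on W E)\<^sup>*)"

definition k_connected :: "nat \<Rightarrow> 'a set \<Rightarrow> ('a \<times> 'a) list \<Rightarrow> bool" where
  "k_connected k V E \<longleftrightarrow> card V > k \<and>
     (\<forall>X. X \<subseteq> V \<and> card X < k \<longrightarrow> connected_on (V - X) E)"

definition no_isolated_vertices :: "'a set \<Rightarrow> ('a \<times> 'a) list \<Rightarrow> bool" where
  "no_isolated_vertices V E \<longleftrightarrow> (\<forall>v\<in>V. \<exists>(i,j)\<in>set E. v = i \<or> v = j)"

text \<open>Euclidean measurement map and measurement set, configurations in real^'d.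
  Vectors in R^m are represented as lists of length m.\<close>
definition meas_E :: "('a \<times> 'a) list \<Rightarrow> ('a \<Rightarrow> real^'d) \<Rightarrow> real list" where
  "meas_E E p = map (\<lambda>(i,j). (norm (p i - p j))\<^sup>2) E"

definition meas_set_E :: "'d::finite itself \<Rightarrow> ('a \<times> 'a) list \<Rightarrow> real list set" where
  "meas_set_E _ E = {meas_E E (p :: 'a \<Rightarrow> real^'d) | p. True}"

end

theory Submission
  imports Defs
begin

definition er :: "('v\<times>'v) list \<Rightarrow> nat set \<Rightarrow> ('v\<times>'v) set" where
  "er E X = {(u,w). \<exists>j\<in>X. j < length E \<and> (E!j = (u,w) \<or> E!j = (w,u))}"

definition RR :: "('v\<times>'v) list \<Rightarrow> nat set \<Rightarrow> nat \<Rightarrow> bool" where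
  "RR E X k \<longleftrightarrow> (fst (E!k), snd (E!k)) \<in> (er E X)\<^sup>*"

definition ends :: "('v\<times>'v) list \<Rightarrow> nat \<Rightarrow> 'v set" where
  "ends E j = {fst (E!j), snd (E!j)}"

definition St :: "('v\<times>'v) list \<Rightarrow> 'v \<Rightarrow> nat set" where
  "St E v = {j. j < length E \<and> v \<in> ends E j}"

lemma er_iff: "(u,w) \<in> er E X \<longleftrightarrow> (\<exists>j\<in>X. j < length E \<and> (E!j = (u,w) \<or> E!j = (w,u)))"
  unfolding er_def by simp

lemma sym_er: "sym (er E X)"
  by (rule symI) (auto simp: er_iff)

lemma rch_sym: "(u,w) \<in> (er E X)\<^sup>* \<Longrightarrow> (w,u) \<in> (er E X)\<^sup>*"
  by (meson sym_er sym_rtrancl symD)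

lemma edge_er:
  assumes "j \<in> X" "j < length E" shows "(fst (E!j), snd (E!j)) \<in> er E X"
proof -
  have "E!j = (fst (E!j), snd (E!j))" by simp
  then show ?thesis unfolding er_iff using assms by blast
qed

lemma er_mono:
  assumes "X \<subseteq> Y" shows "er E X \<subseteq> er E Y"
proof (rule subrelI)
  fix u w assume "(u,w) \<in> er E X"
  then show "(u,w) \<in> er E Y" using assms unfolding er_iff by blast
qed

lemma rch_mono: "X \<subseteq> Y \<Longrightarrow> (u,w) \<in> (er E X)\<^sup>* \<Longrightarrow> (u,w) \<in> (er E Y)\<^sup>*"
  by (rule subsetD[OF rtrancl_mono[OF er_mono]])

lemma RR_pair: "E!k = (a,b) \<Longrightarrow> RR E X k \<longleftrightarrow> (a,b) \<in> (er E X)\<^sup>*"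
  unfolding RR_def by simp

lemma RR_pair': "E!k = (a,b) \<Longrightarrow> RR E X k \<longleftrightarrow> (b,a) \<in> (er E X)\<^sup>*"
  unfolding RR_def using rch_sym[of a b E X] rch_sym[of b a E X] by auto

lemma rch_const:
  assumes "(x,y) \<in> (er E X)\<^sup>*"
    and "\<forall>j\<in>X. j < length E \<longrightarrow> p (fst (E!j)) = p (snd (E!j))"
  shows "p x = p y"
  using assms(1)
proof (induction rule: rtrancl_induct)
  case base then show ?case by simp
next
  case (step y z)
  then obtain j where "j\<in>X" "j < length E" "E!j = (y,z) \<or> E!j = (z,y)"
    unfolding er_iff by blast
  then show ?case using assms(2) step.IH by (metis fst_conv snd_conv)
qed

lemma RR_iff_const:
  assumes "k < length E"
  shows "RR E X k \<longleftrightarrow> (\<forall>p::'v \<Rightarrow> real^'d. (\<forall>j\<in>X. j < length E \<longrightarrow> p (fst (E!j)) = p (snd (E!j)))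
            \<longrightarrow> p (fst (E!k)) = p (snd (E!k)))"
proof
  assume "RR E X k" then show "\<forall>p::'v \<Rightarrow> real^'d. (\<forall>j\<in>X. j < length E \<longrightarrow> p (fst (E!j)) = p (snd (E!j)))
            \<longrightarrow> p (fst (E!k)) = p (snd (E!k))"
  proof (intro allI impI)
    fix p :: "'v \<Rightarrow> real^'d"
    assume pc0: "\<forall>j\<in>X. j < length E \<longrightarrow> p (fst (E!j)) = p (snd (E!j))"
    show "p (fst (E!k)) = p (snd (E!k))"
    proof -
      have "(fst (E!k), snd (E!k)) \<in> (er E X)\<^sup>*" using \<open>RR E X k\<close> unfolding RR_def .
      then show ?thesis by (rule rch_const[OF _ pc0])
    qed
  qed
next
  assume H: "\<forall>p::'v \<Rightarrow> real^'d. (\<forall>j\<in>X. j < length E \<longrightarrow> p (fst (E!j)) = p (snd (E!j)))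
            \<longrightarrow> p (fst (E!k)) = p (snd (E!k))"
  define one :: "real^'d" where "one = (\<chi> i. 1)"
  have one0: "one \<noteq> 0" unfolding one_def by (simp add: vec_eq_iff)
  define p :: "'v \<Rightarrow> real^'d" where
    "p = (\<lambda>u. if (fst (E!k), u) \<in> (er E X)\<^sup>* then 0 else one)"
  have "\<forall>j\<in>X. j < length E \<longrightarrow> p (fst (E!j)) = p (snd (E!j))"
  proof (intro ballI impI)
    fix j assume "j \<in> X" "j < length E"
    then have e1: "(fst (E!j), snd (E!j)) \<in> er E X" by (rule edge_er)
    then have e2: "(snd (E!j), fst (E!j)) \<in> er E X" by (rule symD[OF sym_er])
    have "(fst (E!k), fst (E!j)) \<in> (er E X)\<^sup>* \<longleftrightarrow> (fst (E!k), snd (E!j)) \<in> (er E X)\<^sup>*"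
    proof
      assume "(fst (E!k), fst (E!j)) \<in> (er E X)\<^sup>*"
      then show "(fst (E!k), snd (E!j)) \<in> (er E X)\<^sup>*" using e1 by (rule rtrancl_into_rtrancl)
    next
      assume "(fst (E!k), snd (E!j)) \<in> (er E X)\<^sup>*"
      then show "(fst (E!k), fst (E!j)) \<in> (er E X)\<^sup>*" using e2 by (rule rtrancl_into_rtrancl)
    qed
    then show "p (fst (E!j)) = p (snd (E!j))"
      unfolding p_def by simp
  qed
  then have "p (fst (E!k)) = p (snd (E!k))" by (rule mp[OF spec[OF H]])
  then show "RR E X k" unfolding p_def RR_def using one0 by (auto split: if_splits)
qed

lemma meas_nth: "j < length E \<Longrightarrow> meas_E E p ! j = (norm (p (fst (E!j)) - p (snd (E!j))))\<^sup>2"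
  by (simp add: meas_E_def split_beta)

lemma RR_transfer1:
  fixes E1 :: "('a\<times>'a) list" and E2 :: "('b\<times>'b) list"
  assumes sub: "meas_set_E TYPE('d::finite) E2 \<subseteq> meas_set_E TYPE('d) E1"
    and len: "length E2 = length E1" and k: "k < length E1" and R: "RR E1 X k"
  shows "RR E2 X k"
proof -
  have "\<forall>q::'b \<Rightarrow> real^'d. (\<forall>j\<in>X. j < length E2 \<longrightarrow> q (fst (E2!j)) = q (snd (E2!j)))
            \<longrightarrow> q (fst (E2!k)) = q (snd (E2!k))"
  proof (intro allI impI)
    fix q :: "'b \<Rightarrow> real^'d"
    assume qc: "\<forall>j\<in>X. j < length E2 \<longrightarrow> q (fst (E2!j)) = q (snd (E2!j))"
    have "meas_E E2 q \<in> meas_set_E TYPE('d) E2" unfolding meas_set_E_def by blast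
    then have "meas_E E2 q \<in> meas_set_E TYPE('d) E1" using sub by blast
    then have "\<exists>p::'a\<Rightarrow>real^'d. meas_E E1 p = meas_E E2 q"
      unfolding meas_set_E_def mem_Collect_eq by metis
    then obtain p :: "'a \<Rightarrow> real^'d" where pq: "meas_E E1 p = meas_E E2 q"
      by blast
    have eq: "(norm (p (fst (E1!j)) - p (snd (E1!j))))\<^sup>2 = (norm (q (fst (E2!j)) - q (snd (E2!j))))\<^sup>2"
      if "j < length E1" for j
      using meas_nth[of j E1 p] meas_nth[of j E2 q] pq that len by simp
    have pc: "\<forall>j\<in>X. j < length E1 \<longrightarrow> p (fst (E1!j)) = p (snd (E1!j))"
    proof (intro ballI impI)
      fix j assume j: "j \<in> X" "j < length E1"
      have "q (fst (E2!j)) = q (snd (E2!j))" using qc len j by simp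
      then have "norm (p (fst (E1!j)) - p (snd (E1!j))) = 0" using eq[OF j(2)] by simp
      then show "p (fst (E1!j)) = p (snd (E1!j))" by simp
    qed
    have H1: "\<forall>p::'a \<Rightarrow> real^'d. (\<forall>j\<in>X. j < length E1 \<longrightarrow> p (fst (E1!j)) = p (snd (E1!j)))
            \<longrightarrow> p (fst (E1!k)) = p (snd (E1!k))"
      using R by (subst (asm) RR_iff_const[OF k])
    have "p (fst (E1!k)) = p (snd (E1!k))"
      by (rule mp[OF spec[OF H1] pc])
    then show "q (fst (E2!k)) = q (snd (E2!k))" using eq[OF k] by simp
  qed
  moreover have k2: "k < length E2" using k len by simp
  ultimately show ?thesis by (subst RR_iff_const[OF k2])
qed

lemma RR_transfer:
  fixes E1 :: "('a\<times>'a) list" and E2 :: "('b\<times>'b) list"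
  assumes "meas_set_E TYPE('d::finite) E1 = meas_set_E TYPE('d) E2"
    and "length E2 = length E1" and "k < length E1"
  shows "RR E1 X k \<longleftrightarrow> RR E2 X k"
proof
  assume "RR E1 X k" then show "RR E2 X k"
    by (rule RR_transfer1[OF equalityD2[OF assms(1)] assms(2) assms(3)])
next
  assume "RR E2 X k" show "RR E1 X k"
    by (rule RR_transfer1[OF equalityD1[OF assms(1)] _ _ \<open>RR E2 X k\<close>]) (use assms(2,3) in simp_all)
qed


lemma og_edge:
  assumes "ordered_graph V E" "j < length E"
  shows "fst (E!j) \<in> V \<and> snd (E!j) \<in> V \<and> fst (E!j) \<noteq> snd (E!j)"
proof -
  have all: "\<forall>(i,j)\<in>set E. i \<in> V \<and> j \<in> V \<and> i \<noteq> j"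
    using assms(1) unfolding ordered_graph_def by (elim conjE)
  have "E!j \<in> set E" using assms(2) by simp
  from bspec[OF all this] show ?thesis by (simp add: split_beta)
qed

lemma og_distinct:
  assumes "ordered_graph V E" "j < length E" "j' < length E" "ends E j = ends E j'"
  shows "j = j'"
proof -
  have d: "distinct (map (\<lambda>(i,j). {i,j}) E)" using assms(1) unfolding ordered_graph_def by (elim conjE)
  have "map (\<lambda>(i,j). {i,j}) E ! j = map (\<lambda>(i,j). {i,j}) E ! j'"
    using assms(2-4) unfolding ends_def by (simp add: split_beta)
  then show ?thesis using nth_eq_iff_index_eq[OF d] assms(2,3) by simp
qed

lemma set_idx: "(u,w) \<in> set E \<Longrightarrow> \<exists>j<length E. E!j = (u,w)"
  by (simp add: in_set_conv_nth)

lemma adj_onD: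
  assumes "(y,z) \<in> adj_on W E"
  shows "y \<in> W \<and> z \<in> W \<and> (\<exists>j<length E. E!j = (y,z) \<or> E!j = (z,y))"
proof -
  have yz: "y \<in> W \<and> z \<in> W \<and> ((y,z) \<in> set E \<or> (z,y) \<in> set E)"
    using assms unfolding adj_on_def by (simp only: mem_Collect_eq case_prod_conv)
  have "\<exists>j<length E. E!j = (y,z) \<or> E!j = (z,y)"
  proof (cases "(y,z) \<in> set E")
    case True
    then obtain j where "j<length E" "E!j = (y,z)" using set_idx[OF True] by auto
    then show ?thesis by auto
  next
    case False
    then have zy: "(z,y) \<in> set E" using yz by simp
    obtain j where "j<length E" "E!j = (z,y)" using set_idx[OF zy] by auto
    then show ?thesis by auto
  qed
  then show ?thesis using yz by (elim conjE) (intro conjI)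
qed

lemma adj_rch:
  assumes "(u,w) \<in> (adj_on W E)\<^sup>*"
    and "\<forall>j<length E. fst (E!j) \<in> W \<and> snd (E!j) \<in> W \<longrightarrow> j \<in> X"
  shows "(u,w) \<in> (er E X)\<^sup>*"
  using assms(1)
proof (induction rule: rtrancl_induct)
  case base then show ?case by simp
next
  case (step y z)
  from adj_onD[OF step.hyps(2)] obtain j where
    j: "y \<in> W" "z \<in> W" "j < length E" "E!j = (y,z) \<or> E!j = (z,y)" by auto
  have "fst (E!j) \<in> W \<and> snd (E!j) \<in> W" using j by auto
  then have "j \<in> X" using assms(2) j(3) by auto
  then have e: "(y,z) \<in> er E X" unfolding er_iff using j(3,4) by auto
  show ?case by (rule rtrancl_into_rtrancl[OF step.IH e])
qed

lemma adj_first: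
  assumes "(v,u) \<in> (adj_on W E)\<^sup>*" "v \<noteq> u"
  shows "\<exists>y j. j < length E \<and> y \<in> W \<and> v \<in> W \<and> (E!j = (v,y) \<or> E!j = (y,v))"
  using assms
proof (cases rule: converse_rtranclE)
  case (step y)
  from adj_onD[OF step(1)] show ?thesis by auto
qed simp

lemma kconn: "k_connected 3 V E \<Longrightarrow> Y \<subseteq> V \<Longrightarrow> card Y < 3 \<Longrightarrow> connected_on (V - Y) E"
  unfolding k_connected_def by blast

lemma other_end:
  assumes "ordered_graph V E" "j < length E" "x \<in> ends E j"
  shows "\<exists>y. y \<noteq> x \<and> y \<in> V \<and> (E!j = (x,y) \<or> E!j = (y,x))"
  using og_edge[OF assms(1,2)] assms(3) unfolding ends_def by (cases "E!j") auto

lemma St_diff: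
  assumes og: "ordered_graph V E" and kc: "k_connected 3 V E"
    and v: "v \<in> V" "v' \<in> V" "v \<noteq> v'"
  shows "\<exists>j\<in>St E v. j \<notin> St E v'"
proof -
  have fin: "finite V" using og unfolding ordered_graph_def by simp
  have c3: "card V > 3" using kc unfolding k_connected_def by simp
  have "V - {v,v'} \<noteq> {}"
  proof
    assume "V - {v,v'} = {}"
    then have "V \<subseteq> {v,v'}" by blast
    then have "card V \<le> card {v,v'}" by (simp add: card_mono)
    also have "\<dots> \<le> 2" by (simp add: card_insert_le_m1)
    finally show False using c3 by simp
  qed
  then obtain u where u: "u \<in> V" "u \<noteq> v" "u \<noteq> v'" by blast
  have "connected_on (V - {v'}) E" using kconn[OF kc] v by simp
  then have "(v,u) \<in> (adj_on (V - {v'}) E)\<^sup>*" using u v unfolding connected_on_def by blast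
  from adj_first[OF this] u obtain y j where
    j: "j < length E" "y \<in> V - {v'}" "E!j = (v,y) \<or> E!j = (y,v)" by auto
  then have "j \<in> St E v" "j \<notin> St E v'" unfolding St_def ends_def using v by auto
  then show ?thesis by auto
qed

lemma avoid_rch:
  assumes "(x,y) \<in> (er E X)\<^sup>*" "\<forall>j\<in>X. j < length E \<longrightarrow> z \<notin> ends E j" "x \<noteq> z"
  shows "y \<noteq> z"
  using assms(1)
proof (induction rule: rtrancl_induct)
  case base then show ?case using assms(3) by simp
next
  case (step y w)
  then obtain j where "j\<in>X" "j < length E" "E!j = (y,w) \<or> E!j = (w,y)"
    unfolding er_def by auto
  then show ?case using assms(2) unfolding ends_def by auto
qed

lemma Gb:
  assumes og: "ordered_graph V E" and k: "k \<in> St E v"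
  shows "\<not> RR E ({..<length E} - St E v) k"
proof
  assume R: "RR E ({..<length E} - St E v) k"
  have kl: "k < length E" and vk: "v \<in> ends E k" using k unfolding St_def by auto
  have av: "\<forall>j\<in>{..<length E} - St E v. j < length E \<longrightarrow> v \<notin> ends E j"
    unfolding St_def by auto
  obtain y where y: "y \<noteq> v" "E!k = (v,y) \<or> E!k = (y,v)" using other_end[OF og kl vk] by auto
  from y(2) show False
  proof
    assume "E!k = (v,y)"
    then have "(y,v) \<in> (er E ({..<length E} - St E v))\<^sup>*" using RR_pair' R by metis
    then show False using avoid_rch[OF _ av] y by auto
  next
    assume "E!k = (y,v)"
    then have "(y,v) \<in> (er E ({..<length E} - St E v))\<^sup>*" using RR_pair R by metis
    then show False using avoid_rch[OF _ av] y by auto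
  qed
qed

lemma Gc:
  assumes og: "ordered_graph V E" and kc: "k_connected 3 V E" and v: "v \<in> V"
    and k: "k \<in> St E v" and l: "l \<in> St E v"
  shows "RR E (({..<length E} - St E v) \<union> {k}) l"
proof -
  define X where "X = ({..<length E} - St E v) \<union> {k}"
  have kl: "k < length E" "v \<in> ends E k" "l < length E" "v \<in> ends E l"
    using k l unfolding St_def by auto
  obtain u where u: "u \<noteq> v" "u \<in> V" "E!k = (v,u) \<or> E!k = (u,v)" using other_end[OF og kl(1,2)] by auto
  obtain w where w: "w \<noteq> v" "w \<in> V" "E!l = (v,w) \<or> E!l = (w,v)" using other_end[OF og kl(3,4)] by auto
  have "connected_on (V - {v}) E" using kconn[OF kc] v by simp
  then have "(u,w) \<in> (adj_on (V - {v}) E)\<^sup>*" using u w unfolding connected_on_def by blast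
  moreover have "\<forall>j<length E. fst (E!j) \<in> V - {v} \<and> snd (E!j) \<in> V - {v} \<longrightarrow> j \<in> X"
    unfolding X_def St_def ends_def by auto
  ultimately have uw: "(u,w) \<in> (er E X)\<^sup>*" by (rule adj_rch)
  have "(v,u) \<in> er E X" using u kl(1) unfolding X_def er_def by auto
  then have vw: "(v,w) \<in> (er E X)\<^sup>*" using uw by (rule converse_rtrancl_into_rtrancl)
  from w(3) show ?thesis
  proof
    assume "E!l = (v,w)" then show ?thesis using RR_pair vw unfolding X_def by metis
  next
    assume "E!l = (w,v)" then show ?thesis using RR_pair' vw unfolding X_def by metis
  qed
qed

definition sep :: "('v\<times>'v) list \<Rightarrow> nat set \<Rightarrow> nat set \<Rightarrow> bool" where
  "sep E T A \<longleftrightarrow> (\<forall>X. X \<subseteq> {..<length E} - T \<longrightarrow> (\<forall>j\<in>A. RR E X j \<longrightarrow> RR E (X \<inter> A) j))"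

lemma Gd:
  assumes og: "ordered_graph V E" and kc: "k_connected 3 V E" and v: "v \<in> V"
    and A: "A \<subseteq> {..<length E} - St E v" and sp: "sep E (St E v) A"
  shows "A = {} \<or> A = {..<length E} - St E v"
proof (rule ccontr)
  define U where "U = {..<length E} - St E v"
  assume "\<not> (A = {} \<or> A = {..<length E} - St E v)"
  then obtain k0 l0 where k0: "k0 \<in> A" and l0: "l0 \<in> U" "l0 \<notin> A" using A unfolding U_def by blast
  have notv: "v \<notin> ends E j" if "j \<in> U" for j using that unfolding U_def St_def by auto
  have mixed: "\<exists>x k l. k \<in> A \<and> l \<in> U \<and> l \<notin> A \<and> x \<in> ends E k \<and> x \<in> ends E l"
  proof (rule ccontr)
    assume nm: "\<not> ?thesis"
    define Q where "Q u \<longleftrightarrow> (\<forall>j\<in>U. u \<in> ends E j \<longrightarrow> j \<in> A)" for u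
    have QA: "Q u" if "u \<in> ends E j" "j \<in> A" for u j
      using nm that unfolding Q_def by blast
    have k0U: "k0 \<in> U" "k0 < length E" using k0 A unfolding U_def by auto
    have l0U: "l0 < length E" using l0 unfolding U_def by auto
    define s where "s = fst (E!k0)"
    define t where "t = fst (E!l0)"
    have sV: "s \<in> V - {v}" using og_edge[OF og k0U(2)] notv[OF k0U(1)]
      unfolding s_def ends_def by auto
    have tV: "t \<in> V - {v}" using og_edge[OF og l0U] notv[OF l0(1)]
      unfolding t_def ends_def by auto
    have "connected_on (V - {v}) E" using kconn[OF kc] v by simp
    then have st: "(s,t) \<in> (adj_on (V - {v}) E)\<^sup>*" using sV tV unfolding connected_on_def by blast
    have "Q s" using QA[of s k0] k0 unfolding s_def ends_def by simp
    have "Q t" using st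
    proof (induction rule: rtrancl_induct)
      case base then show ?case using \<open>Q s\<close> by simp
    next
      case (step y z)
      from adj_onD[OF step.hyps(2)] have yz: "y \<in> V - {v}" "z \<in> V - {v}"
        and "\<exists>j<length E. E!j = (y,z) \<or> E!j = (z,y)" by simp_all
      then obtain j where j: "j < length E" "E!j = (y,z) \<or> E!j = (z,y)" by auto
      then have "j \<in> U" "y \<in> ends E j" "z \<in> ends E j"
        using yz unfolding U_def St_def ends_def by auto
      then have "j \<in> A" using step.IH unfolding Q_def by blast
      then show ?case using QA \<open>z \<in> ends E j\<close> by blast
    qed
    then have "l0 \<in> A" using l0 unfolding Q_def t_def ends_def by simp
    then show False using l0 by simp
  qed
  then obtain x k l where kl: "k \<in> A" "l \<in> U" "l \<notin> A" "x \<in> ends E k" "x \<in> ends E l" by blast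
  have kU: "k \<in> U" "k < length E" using kl A unfolding U_def by auto
  have lU: "l < length E" using kl unfolding U_def by auto
  obtain y where y: "y \<noteq> x" "y \<in> V" "E!k = (x,y) \<or> E!k = (y,x)" using other_end[OF og kU(2) kl(4)] by auto
  obtain z where z: "z \<noteq> x" "z \<in> V" "E!l = (x,z) \<or> E!l = (z,x)" using other_end[OF og lU kl(5)] by auto
  have xV: "x \<in> V" using og_edge[OF og kU(2)] kl(4) unfolding ends_def by auto
  have xv: "x \<noteq> v" using notv[OF kU(1)] kl(4) by auto
  have yv: "y \<noteq> v" using notv[OF kU(1)] y(3) unfolding ends_def by auto
  have zv: "z \<noteq> v" using notv[OF kl(2)] z(3) unfolding ends_def by auto
  have "k \<noteq> l" using kl by auto
  then have yz: "y \<noteq> z"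
    using og_distinct[OF og kU(2) lU] y(3) z(3) unfolding ends_def by (auto simp: insert_commute)
  have "card {v,x} < 3" by (cases "v = x") auto
  then have "connected_on (V - {v,x}) E" using kconn[OF kc] v xV by simp
  then have "(y,z) \<in> (adj_on (V - {v,x}) E)\<^sup>*" using y z yv zv yz unfolding connected_on_def by blast
  define X where "X = {j. j < length E \<and> v \<notin> ends E j \<and> x \<notin> ends E j} \<union> {l}"
  have "\<forall>j<length E. fst (E!j) \<in> V - {v,x} \<and> snd (E!j) \<in> V - {v,x} \<longrightarrow> j \<in> X"
    unfolding X_def ends_def by auto
  then have yzX: "(y,z) \<in> (er E X)\<^sup>*" using adj_rch \<open>(y,z) \<in> (adj_on (V - {v,x}) E)\<^sup>*\<close> by metis
  have "(z,x) \<in> er E X" using z(3) lU unfolding X_def er_def by auto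
  then have yx: "(y,x) \<in> (er E X)\<^sup>*" by (rule rtrancl_into_rtrancl[OF yzX])
  have RX: "RR E X k" using y(3) RR_pair[of E k y x X] RR_pair'[of E k x y X] yx by auto
  have XU: "X \<subseteq> {..<length E} - St E v"
    using kl(2) unfolding X_def U_def St_def by auto
  have "RR E (X \<inter> A) k" using sp XU kl(1) RX unfolding sep_def by blast
  then have yx2: "(y,x) \<in> (er E (X \<inter> A))\<^sup>*"
    using y(3) RR_pair[of E k y x "X \<inter> A"] RR_pair'[of E k x y "X \<inter> A"] by auto
  have "\<forall>j\<in>X \<inter> A. j < length E \<longrightarrow> x \<notin> ends E j" using kl(3) unfolding X_def by auto
  then show False using avoid_rch[OF yx2] y(1) by auto
qed


lemma split_rch:
  assumes "k < length E" "E!k = (a,b)" "(x,y) \<in> (er E (X \<union> {k}))\<^sup>*"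
  shows "(x,y) \<in> (er E X)\<^sup>* \<or> (((x,a) \<in> (er E X)\<^sup>* \<or> (x,b) \<in> (er E X)\<^sup>*) \<and>
          ((a,y) \<in> (er E X)\<^sup>* \<or> (b,y) \<in> (er E X)\<^sup>*))"
  using assms(3)
proof (induction rule: rtrancl_induct)
  case base show ?case by simp
next
  case (step y z)
  have e: "(y,z) \<in> er E X \<or> (y = a \<and> z = b) \<or> (y = b \<and> z = a)"
  proof -
    from step.hyps(2) obtain j where j: "j \<in> X \<union> {k}" "j < length E" "E!j = (y,z) \<or> E!j = (z,y)"
      unfolding er_iff by auto
    show ?thesis
    proof (cases "j = k")
      case True then show ?thesis using j assms(2) by auto
    next
      case False then have "j \<in> X" using j by simp
      then have "(y,z) \<in> er E X" unfolding er_iff using j(2,3) by auto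
      then show ?thesis by simp
    qed
  qed
  from e show ?case
  proof (elim disjE conjE)
    assume yz: "(y,z) \<in> er E X"
    from step.IH show ?case
    proof
      assume "(x,y) \<in> (er E X)\<^sup>*"
      then have "(x,z) \<in> (er E X)\<^sup>*" by (rule rtrancl_into_rtrancl[OF _ yz])
      then show ?case by simp
    next
      assume h: "((x,a) \<in> (er E X)\<^sup>* \<or> (x,b) \<in> (er E X)\<^sup>*) \<and> ((a,y) \<in> (er E X)\<^sup>* \<or> (b,y) \<in> (er E X)\<^sup>*)"
      then have h1: "(x,a) \<in> (er E X)\<^sup>* \<or> (x,b) \<in> (er E X)\<^sup>*"
        and h2: "(a,y) \<in> (er E X)\<^sup>* \<or> (b,y) \<in> (er E X)\<^sup>*" by simp_all
      from h2 have "(a,z) \<in> (er E X)\<^sup>* \<or> (b,z) \<in> (er E X)\<^sup>*"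
        by (auto intro: rtrancl_into_rtrancl[OF _ yz])
      then show ?case using h1 by simp
    qed
  next
    assume "y = a" "z = b"
    then show ?case using step.IH by auto
  next
    assume "y = b" "z = a"
    then show ?case using step.IH by auto
  qed
qed

lemma Hstar:
  assumes og: "ordered_graph V E" and T: "T \<subseteq> {..<length E}" "T \<noteq> {}"
    and hb: "\<forall>k\<in>T. \<not> RR E ({..<length E} - T) k"
    and hc: "\<forall>k\<in>T. \<forall>l\<in>T. RR E (({..<length E} - T) \<union> {k}) l"
    and hd: "\<forall>A. A \<subseteq> {..<length E} - T \<longrightarrow> sep E T A \<longrightarrow> A = {} \<or> A = {..<length E} - T"
  shows "\<exists>w\<in>V. T = St E w"
proof -
  define U where "U = {..<length E} - T"
  define r where "r = (er E U)\<^sup>*"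
  obtain k where k: "k \<in> T" using T by auto
  have kl: "k < length E" using k T by auto
  obtain a b where ab: "E!k = (a,b)" by (cases "E!k") auto
  have nab: "(a,b) \<notin> r" using hb k RR_pair[OF ab] unfolding r_def U_def by auto
  have rsym: "(y,x) \<in> r" if "(x,y) \<in> r" for x y using that unfolding r_def by (rule rch_sym)
  have rtr: "(x,z) \<in> r" if "(x,y) \<in> r" "(y,z) \<in> r" for x y z
    using that unfolding r_def by (rule rtrancl_trans)
  have claim: "((a, fst (E!l)) \<in> r \<and> (b, snd (E!l)) \<in> r) \<or> ((b, fst (E!l)) \<in> r \<and> (a, snd (E!l)) \<in> r)"
    if l: "l \<in> T" for l
  proof -
    have "(fst (E!l), snd (E!l)) \<in> (er E (U \<union> {k}))\<^sup>*" using hc k l unfolding RR_def U_def by auto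
    from split_rch[OF kl ab this] have sp: "(fst (E!l), snd (E!l)) \<in> r \<or>
       (((fst (E!l),a) \<in> r \<or> (fst (E!l),b) \<in> r) \<and> ((a,snd (E!l)) \<in> r \<or> (b,snd (E!l)) \<in> r))"
      unfolding r_def .
    have nl: "(fst (E!l), snd (E!l)) \<notin> r" using hb l unfolding RR_def r_def U_def by auto
    have s1: "(fst (E!l),a) \<in> r \<or> (fst (E!l),b) \<in> r"
      and s2: "(a,snd (E!l)) \<in> r \<or> (b,snd (E!l)) \<in> r" using sp nl by auto
    from s1 show ?thesis
    proof
      assume fa: "(fst (E!l),a) \<in> r"
      have "(a,snd (E!l)) \<notin> r"
      proof
        assume "(a,snd (E!l)) \<in> r"
        then have "(fst (E!l), snd (E!l)) \<in> r" by (rule rtr[OF fa])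
        with nl show False by (rule notE)
      qed
      then have "(b,snd (E!l)) \<in> r" using s2 by auto
      then show ?thesis using rsym[OF fa] by auto
    next
      assume fb: "(fst (E!l),b) \<in> r"
      have "(b,snd (E!l)) \<notin> r"
      proof
        assume "(b,snd (E!l)) \<in> r"
        then have "(fst (E!l), snd (E!l)) \<in> r" by (rule rtr[OF fb])
        with nl show False by (rule notE)
      qed
      then have "(a,snd (E!l)) \<in> r" using s2 by auto
      then show ?thesis using rsym[OF fb] by auto
    qed
  qed
  have single: "T = St E c" if c1: "\<forall>l\<in>T. c \<in> ends E l" and c2: "\<forall>u. (c,u) \<in> r \<longrightarrow> u = c" for c
  proof
    show "T \<subseteq> St E c" using c1 T(1) unfolding St_def by auto
    show "St E c \<subseteq> T"
    proof
      fix j assume j: "j \<in> St E c"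
      then have jl: "j < length E" and cj: "c \<in> ends E j" unfolding St_def by auto
      show "j \<in> T"
      proof (rule ccontr)
        assume "j \<notin> T" then have "j \<in> U" using jl unfolding U_def by auto
        then have e: "(fst (E!j), snd (E!j)) \<in> r" unfolding r_def using edge_er[OF _ jl] by auto
        have ne: "fst (E!j) \<noteq> snd (E!j)" using og_edge[OF og jl] by simp
        from cj have "fst (E!j) = c \<or> snd (E!j) = c" unfolding ends_def by auto
        then show False
        proof
          assume "fst (E!j) = c" then show False using e c2 ne by auto
        next
          assume "snd (E!j) = c" then show False using rsym[OF e] c2 ne by auto
        qed
      qed
    qed
  qed
  have aV: "a \<in> V" "b \<in> V" using og_edge[OF og kl] ab by auto
  show ?thesis
  proof (cases "\<forall>u. (a,u) \<in> r \<longrightarrow> u = a")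
    case True
    have "\<forall>l\<in>T. a \<in> ends E l"
    proof
      fix l assume "l \<in> T"
      from claim[OF this] True show "a \<in> ends E l" unfolding ends_def by auto
    qed
    then show ?thesis using single True aV by auto
  next
    case Fa: False
    show ?thesis
    proof (cases "\<forall>u. (b,u) \<in> r \<longrightarrow> u = b")
      case True
      have "\<forall>l\<in>T. b \<in> ends E l"
      proof
        fix l assume "l \<in> T"
        from claim[OF this] True show "b \<in> ends E l" unfolding ends_def by auto
      qed
      then show ?thesis using single True aV by auto
    next
      case Fb: False
      from Fa obtain a' where a': "(a,a') \<in> r" "a' \<noteq> a" by auto
      from Fb obtain b' where b': "(b,b') \<in> r" "b' \<noteq> b" by auto
      have firstedge: "\<exists>j\<in>U. (c, fst (E!j)) \<in> r" if cc: "(c,c') \<in> r" and cne: "c' \<noteq> c" for c c'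
      proof -
        from cc have "(c,c') \<in> (er E U)\<^sup>*" unfolding r_def by simp
        then obtain y where cy: "(c,y) \<in> er E U" using cne by (cases rule: converse_rtranclE) auto
        then obtain j where j: "j\<in>U" "j<length E" "E!j = (c,y) \<or> E!j = (y,c)" unfolding er_iff by auto
        have "(c,y) \<in> r" using cy unfolding r_def by auto
        then have "(c, fst (E!j)) \<in> r" using j(3) unfolding r_def by auto
        then show ?thesis using j(1) by auto
      qed
      define A where "A = {j \<in> U. (a, fst (E!j)) \<in> r}"
      have AU: "A \<subseteq> {..<length E} - T" unfolding A_def U_def by auto
      have Ane: "A \<noteq> {}" using firstedge[OF a'] unfolding A_def by auto
      have AneU: "A \<noteq> {..<length E} - T"
      proof -
        obtain j where j: "j \<in> U" "(b, fst (E!j)) \<in> r" using firstedge[OF b'] by auto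
        have "j \<notin> A"
        proof
          assume "j \<in> A"
          then have "(a, fst (E!j)) \<in> r" unfolding A_def by simp
          then have "(a,b) \<in> r" by (rule rtr[OF _ rsym[OF j(2)]])
          then show False using nab by simp
        qed
        then show ?thesis using j(1) unfolding U_def by auto
      qed
      have "sep E T A" unfolding sep_def
      proof (intro allI impI ballI)
        fix X j assume X: "X \<subseteq> {..<length E} - T" and j: "j \<in> A" and R: "RR E X j"
        have XU: "X \<subseteq> U" using X unfolding U_def .
        have stay: "(x,y) \<in> (er E (X \<inter> A))\<^sup>*" if xy: "(x,y) \<in> (er E X)\<^sup>*" and ax: "(a,x) \<in> r" for x y
          using xy
        proof (induction rule: rtrancl_induct)
          case base show ?case by simp
        next
          case (step y z)
          have "X \<inter> A \<subseteq> U" using XU by auto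
          then have "(x,y) \<in> r" unfolding r_def by (rule rch_mono[OF _ step.IH])
          then have ay: "(a,y) \<in> r" by (rule rtr[OF ax])
          from step.hyps(2) obtain j' where j': "j'\<in>X" "j' < length E" "E!j' = (y,z) \<or> E!j' = (z,y)"
            unfolding er_iff by auto
          have j'U: "j' \<in> U" using j' XU by auto
          have "(y,z) \<in> er E U" unfolding er_iff using j'U j' by auto
          then have "(y,z) \<in> r" unfolding r_def by auto
          then have az: "(a,z) \<in> r" by (rule rtr[OF ay])
          have "(a, fst (E!j')) \<in> r" using j'(3) ay az by auto
          then have "j' \<in> A" unfolding A_def using j'U by auto
          then have "(y,z) \<in> er E (X \<inter> A)" unfolding er_iff using j' by auto
          then show ?case by (rule rtrancl_into_rtrancl[OF step.IH])
        qed
        have "(a, fst (E!j)) \<in> r" using j unfolding A_def by simp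
        from stay[OF R[unfolded RR_def] this] show "RR E (X \<inter> A) j" unfolding RR_def .
      qed
      then have "A = {} \<or> A = {..<length E} - T" using hd AU by auto
      then show ?thesis using Ane AneU by auto
    qed
  qed
qed

lemma edge_set_nth: "k < length E \<Longrightarrow> edge_set E ! k = ends E k"
  by (simp add: edge_set_def ends_def split_beta)


theorem mainTheorem3:
  fixes VG :: "'a set" and EG :: "('a \<times> 'a) list"
    and VH :: "'b set" and EH :: "('b \<times> 'b) list"
  assumes "ordered_graph VG EG" and "k_connected 3 VG EG"
    and "ordered_graph VH EH" and "no_isolated_vertices VH EH"
    and "length EH = length EG"
    and "meas_set_E TYPE('d::finite) EG = meas_set_E TYPE('d) EH"
  shows "\<exists>\<sigma>. bij_betw \<sigma> VG VH \<and>
           (\<forall>k < length EG. edge_set EH ! k = \<sigma> ` (edge_set EG ! k))"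
proof -
  note ogG = assms(1) and kc = assms(2) and ogH = assms(3) and len = assms(5)
  have tr: "RR EG X k \<longleftrightarrow> RR EH X k" if "k < length EG" for X k
    by (rule RR_transfer[OF assms(6) len that])
  have UU: "{..<length EH} = {..<length EG}" using len by simp
  have star: "\<exists>w\<in>VH. St EG v = St EH w" if v: "v \<in> VG" for v
  proof -
    define T where "T = St EG v"
    have TU: "T \<subseteq> {..<length EH}" unfolding T_def St_def using len by auto
    have c3: "card VG > 3" using kc unfolding k_connected_def by simp
    have "VG - {v} \<noteq> {}"
    proof
      assume "VG - {v} = {}"
      then have "VG \<subseteq> {v}" by blast
      then have "card VG \<le> card {v}" using card_mono[of "{v}" VG] by simp
      then show False using c3 by simp
    qed
    then obtain v' where v': "v' \<in> VG" "v \<noteq> v'" by blast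
    have Tne: "T \<noteq> {}" using St_diff[OF ogG kc v v'(1) v'(2)] unfolding T_def by auto
    have hb: "\<forall>k\<in>T. \<not> RR EH ({..<length EH} - T) k"
    proof
      fix k assume k: "k \<in> T"
      then have kl: "k < length EG" unfolding T_def St_def by simp
      have "\<not> RR EG ({..<length EG} - T) k" using Gb[OF ogG] k unfolding T_def by simp
      then show "\<not> RR EH ({..<length EH} - T) k" using tr[OF kl] UU by simp
    qed
    have hc: "\<forall>k\<in>T. \<forall>l\<in>T. RR EH (({..<length EH} - T) \<union> {k}) l"
    proof (intro ballI)
      fix k l assume k: "k \<in> T" and l: "l \<in> T"
      then have ll: "l < length EG" unfolding T_def St_def by simp
      have "RR EG (({..<length EG} - T) \<union> {k}) l" using Gc[OF ogG kc v] k l unfolding T_def by simp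
      then show "RR EH (({..<length EH} - T) \<union> {k}) l" using tr[OF ll] UU by simp
    qed
    have hd: "\<forall>A. A \<subseteq> {..<length EH} - T \<longrightarrow> sep EH T A \<longrightarrow> A = {} \<or> A = {..<length EH} - T"
    proof (intro allI impI)
      fix A assume A: "A \<subseteq> {..<length EH} - T" and sH: "sep EH T A"
      have sG: "sep EG T A" unfolding sep_def
      proof (intro allI impI ballI)
        fix X j assume X: "X \<subseteq> {..<length EG} - T" and j: "j \<in> A" and R: "RR EG X j"
        have jl: "j < length EG" using j A len by auto
        have "RR EH X j" using R tr[OF jl] by simp
        then have "RR EH (X \<inter> A) j" using sH X j UU unfolding sep_def by simp
        then show "RR EG (X \<inter> A) j" using tr[OF jl] by simp
      qed
      have "A \<subseteq> {..<length EG} - St EG v" using A UU unfolding T_def by simp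
      from Gd[OF ogG kc v this] sG show "A = {} \<or> A = {..<length EH} - T"
        using UU unfolding T_def by simp
    qed
    from Hstar[OF ogH TU Tne hb hc hd] show ?thesis unfolding T_def .
  qed
  define \<sigma> where "\<sigma> v = (SOME w. w \<in> VH \<and> St EG v = St EH w)" for v
  have \<sigma>: "\<sigma> v \<in> VH \<and> St EG v = St EH (\<sigma> v)" if "v \<in> VG" for v
  proof -
    have "\<exists>w. w \<in> VH \<and> St EG v = St EH w" using star[OF that] by auto
    then show ?thesis unfolding \<sigma>_def by (rule someI_ex)
  qed
  have inj: "inj_on \<sigma> VG"
  proof (rule inj_onI)
    fix v v' assume v: "v \<in> VG" "v' \<in> VG" "\<sigma> v = \<sigma> v'"
    then have eq: "St EG v = St EG v'" using \<sigma>[OF v(1)] \<sigma>[OF v(2)] by simp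
    show "v = v'"
    proof (rule ccontr)
      assume "v \<noteq> v'"
      from St_diff[OF ogG kc v(1) v(2) this] eq show False by auto
    qed
  qed
  have edge: "ends EH k = \<sigma> ` ends EG k" if k: "k < length EG" for k
  proof -
    obtain a b where ab: "EG!k = (a,b)" by (cases "EG!k") auto
    have abV: "a \<in> VG" "b \<in> VG" "a \<noteq> b" using og_edge[OF ogG k] ab by auto
    have "k \<in> St EG a" "k \<in> St EG b" using k ab unfolding St_def ends_def by auto
    then have "k \<in> St EH (\<sigma> a)" "k \<in> St EH (\<sigma> b)" using \<sigma>[OF abV(1)] \<sigma>[OF abV(2)] by auto
    then have in1: "\<sigma> a \<in> ends EH k" "\<sigma> b \<in> ends EH k" unfolding St_def by auto
    have ne: "\<sigma> a \<noteq> \<sigma> b" using inj abV unfolding inj_on_def by auto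
    have "ends EH k = {\<sigma> a, \<sigma> b}" using in1 ne unfolding ends_def by auto
    then show ?thesis using ab unfolding ends_def by simp
  qed
  have img: "\<sigma> ` VG = VH"
  proof
    show "\<sigma> ` VG \<subseteq> VH" using \<sigma> by auto
    show "VH \<subseteq> \<sigma> ` VG"
    proof
      fix w assume w: "w \<in> VH"
      then obtain i j where ij: "(i,j) \<in> set EH" "w = i \<or> w = j"
        using assms(4) unfolding no_isolated_vertices_def by auto
      obtain k where k: "k < length EH" "EH!k = (i,j)" using set_idx[OF ij(1)] by auto
      have kl: "k < length EG" using k len by simp
      have "w \<in> ends EH k" using k ij(2) unfolding ends_def by auto
      then have "w \<in> \<sigma> ` ends EG k" using edge[OF kl] by simp
      moreover have "ends EG k \<subseteq> VG" using og_edge[OF ogG kl] unfolding ends_def by auto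
      ultimately show "w \<in> \<sigma> ` VG" by auto
    qed
  qed
  have "bij_betw \<sigma> VG VH" using inj img unfolding bij_betw_def by simp
  moreover have "\<forall>k < length EG. edge_set EH ! k = \<sigma> ` (edge_set EG ! k)"
  proof (intro allI impI)
    fix k assume k: "k < length EG"
    then have kH: "k < length EH" using len by simp
    show "edge_set EH ! k = \<sigma> ` (edge_set EG ! k)"
      unfolding edge_set_nth[OF k] edge_set_nth[OF kH] by (rule edge[OF k])
  qed
  ultimately show ?thesis by blast
qed

end
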